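(* Consider the real ODE system $$\frac{dp}{dt}=p\,(pR(v_c)-1),\qquad \frac{dv_c}{dt}=-\frac{p}{4}(1+v_c^2),\qquad R(v)=\frac12\left(\frac1v-v\right),$$ and let $\Omega=\{(v,p):v>0,\ -v^{-1}\le p\le v\}$. Then for every initial datum $(v_c(0),p(0))\in\Omega$ the solution satisfies $(v_c(t),p(t))\in\Omega$ for all $t>0$, and $v_c(t)$ cannot reach $0$ or $\infty$ at any finite time; hence the solution exists for all $0<t<\infty$.
   Context: This system is the form, with dissipation coefficient normalized to $\nu=1$, of the pole-dynamics ODEs for the generalized Constantin–Lax–Majda equation with $a=1/2$, $\sigma=0$, written in the variable $p=\omega_{-2,i}/(v_c(1-v_c^2))$. *)

theory Defs
  imports "HOL-Analysis.Analysis"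
begin

definition R :: "real \<Rightarrow> real" where
  "R v = (1/2) * (1/v - v)"

definition Omega :: "(real \<times> real) set" where
  "Omega = {(v, p). v > 0 \<and> - (1/v) \<le> p \<and> p \<le> v}"

text \<open>(v, p) solves the system on the set I (derivatives taken within I, one-sided at endpoints),
  with v nonzero so that R(v) is genuinely defined.\<close>
definition is_solution_on :: "real set \<Rightarrow> (real \<Rightarrow> real) \<Rightarrow> (real \<Rightarrow> real) \<Rightarrow> bool" where
  "is_solution_on I v p \<longleftrightarrow>
     (\<forall>t\<in>I. v t \<noteq> 0 \<and>
        (p has_real_derivative (p t * (p t * R (v t) - 1))) (at t within I) \<and>
        (v has_real_derivative (- (p t / 4) * (1 + (v t)\<^sup>2))) (at t within I))"

end

theory Submission
  imports Defs
begin
definition Fv :: "real \<Rightarrow> real" where "Fv x = 2*arctan x - 2*x*(1-x^2)/(1+x^2)^2"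
definition Kv :: "real \<Rightarrow> real" where "Kv x = Fv x - 4*x^3/(1+x^2)^2"
definition Lv :: "real \<Rightarrow> real" where "Lv x = Fv x + 4*x/(1+x^2)^2"
definition Wq :: "real \<Rightarrow> real \<Rightarrow> real" where "Wq a b = b*4*a^2/(1+a^2)^2"

lemma pos1: "(1+x^2::real) > 0" by (simp add: add_pos_nonneg)
lemma pos1': "(1+x*x::real) \<noteq> 0" using pos1[of x] by (simp add: power2_eq_square)

lemma Fv_deriv: "(Fv has_real_derivative (16*x^2/(1+x^2)^3)) (at x within S)"
  unfolding Fv_def 
  apply (rule derivative_eq_intros refl)+
  using pos1[of x] apply simp
  apply (simp add: power2_eq_square)
  using pos1'[of x] apply (simp add: power2_eq_square power3_eq_cube divide_simps)
  apply algebra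
  done

lemma Kv_deriv: "(Kv has_real_derivative (4*x^2/(1+x^2)^2)) (at x within S)"
  unfolding Kv_def 
  apply (rule derivative_eq_intros refl Fv_deriv)+
  using pos1[of x] apply simp
  apply (simp add: power2_eq_square)
  using pos1'[of x] apply (simp add: power2_eq_square power3_eq_cube divide_simps)
  apply algebra
  done

lemma Lv_deriv: "(Lv has_real_derivative (4/(1+x^2)^2)) (at x within S)"
  unfolding Lv_def 
  apply (rule derivative_eq_intros refl Fv_deriv)+
  using pos1[of x] apply simp
  apply (simp add: power2_eq_square)
  using pos1'[of x] apply (simp add: power2_eq_square power3_eq_cube divide_simps)
  done

lemma Fv_cont: "continuous_on S Fv"
  using Fv_deriv DERIV_isCont continuous_at_imp_continuous_on by blast
lemma Kv_cont: "continuous_on S Kv"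
  using Kv_deriv DERIV_isCont continuous_at_imp_continuous_on by blast

lemma Fv_strict: assumes "0 < a" "a < b" shows "Fv a < Fv b"
proof (rule DERIV_pos_imp_increasing[OF assms(2)])
  fix x assume "a \<le> x" "x \<le> b"
  hence "x > 0" using assms by auto
  thus "\<exists>y. DERIV Fv x :> y \<and> 0 < y"
    using Fv_deriv[of x UNIV] pos1[of x] by (intro exI[of _ "16*x^2/(1+x^2)^3"]) auto
qed

lemma Fv_le_iff: assumes "0 < a" "0 < b" shows "Fv a \<le> Fv b \<longleftrightarrow> a \<le> b"
  using Fv_strict assms by (metis linorder_not_le order_less_imp_le order_le_less)

lemma Kv_mono: assumes "a \<le> b" shows "Kv a \<le> Kv b"
  by (rule DERIV_nonneg_imp_nondecreasing[OF assms])
     (use Kv_deriv pos1 in \<open>auto intro!: exI[of _ "4*_^2/(1+_^2)^2"]\<close>)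

lemma Lv_mono: assumes "a \<le> b" shows "Lv a \<le> Lv b"
  by (rule DERIV_nonneg_imp_nondecreasing[OF assms])
     (use Lv_deriv pos1 in \<open>auto intro!: exI[of _ "4/(1+_^2)^2"]\<close>)

lemma Kv_pos: assumes "0 < x" shows "0 < Kv x"
proof -
  have "Kv 0 < Kv x"
  proof (rule DERIV_pos_imp_increasing_open[OF assms])
    fix y :: real assume "0 < y" "y < x"
    thus "\<exists>z. DERIV Kv y :> z \<and> 0 < z"
      using Kv_deriv[of y UNIV] pos1[of y] by (intro exI[of _ "4*y^2/(1+y^2)^2"]) auto
  qed (rule Kv_cont)
  thus ?thesis by (simp add: Kv_def Fv_def)
qed

lemma Fv_inv: assumes "0 < x" shows "Fv (1/x) = pi - Fv x"
proof -
  have "arctan (1/x) = pi/2 - arctan x" using arctan_inverse[of x] assms by (simp add: inverse_eq_divide)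
  moreover have "2*(1/x)*(1-(1/x)^2)/(1+(1/x)^2)^2 = - (2*x*(1-x^2)/(1+x^2)^2)"
    using assms pos1'[of x] by (simp add: power2_eq_square divide_simps) (simp add: algebra_simps)
  ultimately show ?thesis unfolding Fv_def by simp
qed

lemma Lv_inv: assumes "0 < x" shows "Lv (1/x) = pi - Kv x"
  unfolding Lv_def Kv_def Fv_inv[OF assms] using assms pos1'[of x]
  by (simp add: power2_eq_square power3_eq_cube divide_simps) (simp add: algebra_simps)

lemma Lv_lt_pi: assumes "0 < x" shows "Lv x < pi"
  using Lv_inv[of "1/x"] Kv_pos[of "1/x"] assms by simp

definition Gi :: "real \<Rightarrow> real" where "Gi y = (THE x. 0 < x \<and> Fv x = y)"

lemma Fv_small: assumes "e > 0" shows "\<exists>a. 0 < a \<and> a \<le> 1 \<and> Fv a < e"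
proof -
  have "isCont Fv 0" using Fv_deriv DERIV_isCont by blast
  hence "(Fv \<longlongrightarrow> 0) (at 0)" by (simp add: isCont_def Fv_def)
  hence "eventually (\<lambda>x. Fv x < e) (at 0)" using assms order_tendstoD(2) by blast
  then obtain d where d: "d > 0" "\<And>x. x \<noteq> 0 \<Longrightarrow> dist x 0 < d \<Longrightarrow> Fv x < e"
    unfolding eventually_at by auto
  show ?thesis using d by (intro exI[of _ "min (d/2) 1"]) auto
qed

lemma Gi_Fv: assumes "0 < x" shows "Gi (Fv x) = x"
  unfolding Gi_def
proof (rule the_equality)
  fix z assume "0 < z \<and> Fv z = Fv x"
  thus "z = x" using Fv_le_iff[of z x] Fv_le_iff[of x z] assms by auto
qed (use assms in auto)

lemma Gi_prop: assumes "0 < y" "y < pi" shows "0 < Gi y \<and> Fv (Gi y) = y"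
proof -
  obtain a where a: "0 < a" "a \<le> 1" "Fv a < min y (pi - y)"
    using Fv_small[of "min y (pi - y)"] assms by auto
  have b: "Fv (1/a) = pi - Fv a" using Fv_inv a by auto
  have "a \<le> 1/a" using a by (simp add: divide_simps) (metis mult_le_one less_imp_le)
  then obtain x where x: "a \<le> x" "x \<le> 1/a" "Fv x = y"
    using IVT'[of Fv a y "1/a"] a b Fv_cont by force
  hence "0 < x" using a by auto
  thus ?thesis using x Gi_Fv by metis
qed

lemma Gi_deriv: assumes "0 < y" "y < pi"
  shows "DERIV Gi y :> inverse (16*(Gi y)^2/(1+(Gi y)^2)^3)"
proof (rule DERIV_inverse_function[where f=Fv and a=0 and b=pi])
  show "DERIV Fv (Gi y) :> 16*(Gi y)^2/(1+(Gi y)^2)^3" by (rule Fv_deriv)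
  show "16*(Gi y)^2/(1+(Gi y)^2)^3 \<noteq> 0" using Gi_prop[OF assms] pos1[of "Gi y"] by simp
  show "\<And>z. 0 < z \<Longrightarrow> z < pi \<Longrightarrow> Fv (Gi z) = z" using Gi_prop by blast
  have gp: "0 < Gi y" using Gi_prop[OF assms] by blast
  have "isCont Gi (Fv (Gi y))"
  proof (rule isCont_inverse_function[where d="Gi y / 2" and f=Fv and g=Gi and x="Gi y"])
    show "0 < Gi y / 2" using gp by simp
    fix z assume "\<bar>z - Gi y\<bar> \<le> Gi y / 2"
    hence "0 < z" using gp abs_ge_minus_self[of "z - Gi y"] by linarith
    thus "Gi (Fv z) = z" by (rule Gi_Fv)
  next
    show "\<And>z. \<bar>z - Gi y\<bar> \<le> Gi y / 2 \<Longrightarrow> isCont Fv z" using Fv_deriv DERIV_isCont by blast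
  qed
  thus "isCont Gi y" using Gi_prop[OF assms] by simp
qed (use assms in auto)

lemma wf_deriv:
  assumes nz: "v t \<noteq> 0"
   and dp: "(p has_real_derivative (p t*(p t*R(v t) - 1))) (at t within I)"
   and dv: "(v has_real_derivative (-(p t/4)*(1+(v t)^2))) (at t within I)"
  shows "((\<lambda>s. Wq (v s) (p s)) has_real_derivative (- Wq (v t) (p t))) (at t within I)"
  unfolding Wq_def
  apply (rule derivative_eq_intros dp dv refl)+
  using pos1[of "v t"] apply simp
  using pos1'[of "v t"] nz apply (simp add: R_def power2_eq_square power3_eq_cube divide_simps)
  apply algebra
  done

lemma Wq_le: "0 < a \<Longrightarrow> (Wq a b \<le> 4*a^3/(1+a^2)^2) = (b \<le> a)"
  unfolding Wq_def using pos1[of a] by (simp add: divide_simps power3_eq_cube power2_eq_square)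
lemma Wq_ge: "0 < a \<Longrightarrow> (-4*a/(1+a^2)^2 \<le> Wq a b) = (-(1/a) \<le> b)"
  unfolding Wq_def using pos1[of a] apply (simp add: divide_simps power2_eq_square)
  by (metis mult_le_cancel_left_pos mult_minus1_right mult.commute)
lemma Wq_sign: "0 < a \<Longrightarrow> (0 \<le> Wq a b) = (0 \<le> b)"
  unfolding Wq_def using pos1[of a] by (simp add: zero_le_divide_iff zero_le_mult_iff)

lemma part1:
  assumes T: "T > 0" and sol: "is_solution_on {0..<T} v p" and init: "(v 0, p 0) \<in> Omega"
    and t: "t \<in> {0..<T}"
  shows "(v t, p t) \<in> Omega"
proof -
  define I where "I = {0..<T}"
  have nz: "\<And>s. s \<in> I \<Longrightarrow> v s \<noteq> 0"
   and dp: "\<And>s. s \<in> I \<Longrightarrow> (p has_real_derivative (p s*(p s*R(v s) - 1))) (at s within I)"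
   and dv: "\<And>s. s \<in> I \<Longrightarrow> (v has_real_derivative (-(p s/4)*(1+(v s)^2))) (at s within I)"
    using sol unfolding is_solution_on_def I_def by auto
  have tI: "t \<in> I" and zI: "0 \<in> I" using t T by (auto simp: I_def)
  have v0: "v 0 > 0" and p0u: "p 0 \<le> v 0" and p0l: "-(1/v 0) \<le> p 0"
    using init by (auto simp: Omega_def)
  have cont: "continuous_on I v"
    using dv DERIV_continuous continuous_on_eq_continuous_within by blast
  have vpos: "v s > 0" if sI: "s \<in> I" for s
  proof (rule ccontr)
    assume "\<not> v s > 0"
    hence "-v 0 \<le> 0" "0 \<le> - v s" using v0 by auto
    moreover have "0 \<le> s" using sI by (auto simp: I_def)
    moreover have "continuous_on {0..s} (\<lambda>x. - v x)"
      using sI by (intro continuous_intros continuous_on_subset[OF cont]) (auto simp: I_def)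
    ultimately obtain x where "0 \<le> x" "x \<le> s" "- v x = 0"
      using IVT'[of "\<lambda>x. - v x" 0 0 s] by auto
    moreover hence "x \<in> I" using sI by (auto simp: I_def)
    ultimately show False using nz by auto
  qed
  have "\<exists>c. \<forall>s\<in>I. Wq (v s) (p s) * exp s = c"
  proof (rule has_field_derivative_zero_constant)
    show "convex I" by (simp add: I_def)
    fix s assume sI: "s \<in> I"
    show "((\<lambda>s. Wq (v s) (p s) * exp s) has_real_derivative 0) (at s within I)"
      by (rule derivative_eq_intros wf_deriv[OF nz[OF sI] dp[OF sI] dv[OF sI]] refl)+ simp
  qed
  then obtain c where c: "\<And>s. s \<in> I \<Longrightarrow> Wq (v s) (p s) * exp s = c" by blast
  define w0 where "w0 = Wq (v 0) (p 0)"
  have wt: "Wq (v t) (p t) = w0 * exp (-t)"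
    using c[OF tI] c[OF zI] by (simp add: w0_def exp_minus field_simps)
  have "\<exists>c. \<forall>s\<in>I. Fv (v s) - Wq (v s) (p s) = c"
  proof (rule has_field_derivative_zero_constant)
    show "convex I" by (simp add: I_def)
    fix s assume sI: "s \<in> I"
    have "((\<lambda>s. Fv (v s) - Wq (v s) (p s)) has_real_derivative
       (16*(v s)^2/(1+(v s)^2)^3 * (-(p s/4)*(1+(v s)^2)) - (- Wq (v s) (p s)))) (at s within I)"
      by (rule derivative_eq_intros DERIV_chain2[OF Fv_deriv dv[OF sI]] wf_deriv[OF nz[OF sI] dp[OF sI] dv[OF sI]])+ simp
    moreover have "16*(v s)^2/(1+(v s)^2)^3 * (-(p s/4)*(1+(v s)^2)) - (- Wq (v s) (p s)) = 0"
      unfolding Wq_def using pos1'[of "v s"] by (simp add: power2_eq_square power3_eq_cube divide_simps)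
    ultimately show "((\<lambda>s. Fv (v s) - Wq (v s) (p s)) has_real_derivative 0) (at s within I)"
      by simp
  qed
  then obtain d where d: "\<And>s. s \<in> I \<Longrightarrow> Fv (v s) - Wq (v s) (p s) = d" by blast
  have Fe: "Fv (v t) = Fv (v 0) + Wq (v t) (p t) - w0"
    using d[OF tI] d[OF zI] by (simp add: w0_def)
  have vt: "v t > 0" using vpos[OF tI] .
  have et: "exp (-t) \<le> 1" "exp (-t) > 0" using tI by (auto simp: I_def)
  show ?thesis
  proof (cases "p 0 \<ge> 0")
    case True
    hence w0: "w0 \<ge> 0" using Wq_sign[OF v0] by (simp add: w0_def)
    hence "Wq (v t) (p t) \<ge> 0" using wt et by simp
    hence ptp: "p t \<ge> 0" using Wq_sign[OF vt] by simp
    have "Wq (v t) (p t) \<le> w0" using wt et w0 by (simp add: mult_left_le)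
    hence "Fv (v t) \<le> Fv (v 0)" using Fe by simp
    hence "v t \<le> v 0" using Fv_le_iff[OF vt v0] by simp
    hence K: "Kv (v t) \<le> Kv (v 0)" by (rule Kv_mono)
    have "w0 \<le> 4*(v 0)^3/(1+(v 0)^2)^2" using Wq_le[OF v0] p0u by (simp add: w0_def)
    hence "Wq (v t) (p t) \<le> 4*(v t)^3/(1+(v t)^2)^2" using Fe K by (simp add: Kv_def)
    hence "p t \<le> v t" using Wq_le[OF vt] by simp
    moreover have "-(1/v t) \<le> p t" using ptp vt by (smt (verit) divide_pos_pos)
    ultimately show ?thesis using vt by (simp add: Omega_def)
  next
    case False
    hence w0: "w0 < 0" using Wq_sign[OF v0, of "p 0"] by (simp add: w0_def)
    hence "Wq (v t) (p t) < 0" using wt et by (simp add: mult_neg_pos)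
    hence ptn: "p t < 0" using Wq_sign[OF vt] by (simp add: not_le[symmetric])
    have "Wq (v t) (p t) \<ge> w0" using wt et w0
      by (simp add: mult_le_cancel_left1 mult_le_cancel_left)
    hence "Fv (v t) \<ge> Fv (v 0)" using Fe by simp
    hence "v 0 \<le> v t" using Fv_le_iff[OF v0 vt] by simp
    hence L: "Lv (v 0) \<le> Lv (v t)" by (rule Lv_mono)
    have "w0 \<ge> -4*(v 0)/(1+(v 0)^2)^2" using Wq_ge[OF v0] p0l by (simp add: w0_def)
    hence "Wq (v t) (p t) \<ge> -4*(v t)/(1+(v t)^2)^2" using Fe L by (simp add: Lv_def)
    hence "-(1/v t) \<le> p t" using Wq_ge[OF vt] by simp
    moreover have "p t \<le> v t" using ptn vt by simp
    ultimately show ?thesis using vt by (simp add: Omega_def)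
  qed
qed

definition qf :: "real \<Rightarrow> real" where "qf x = (1+x^2)^2/(4*x^2)"

lemma qf_deriv: assumes "x \<noteq> 0" shows "(qf has_real_derivative ((1+x^2)*(x^2-1)/(2*x^3))) (at x within S)"
  unfolding qf_def
  apply (rule derivative_eq_intros refl)+
  using assms apply simp
  using assms apply (simp add: power2_eq_square power3_eq_cube divide_simps)
  apply algebra
  done

lemma alg: assumes "x \<noteq> 0"
  shows "-a*qf x + a*((1+x^2)*(x^2-1)/(2*x^3))*(-(a*(1+x^2)^3/(16*x^2))) = (a*qf x)*((a*qf x)*R x - 1)"
  unfolding qf_def R_def using assms
  by (simp add: power2_eq_square power3_eq_cube divide_simps) algebra
lemma ps_deriv:
  fixes V :: "real \<Rightarrow> real"
  assumes vp: "V t \<noteq> 0"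
   and dV: "(V has_real_derivative -(c*exp(-t)*(1+(V t)^2)^3/(16*(V t)^2))) (at t)"
  shows "((\<lambda>t. c*exp(-t)*qf (V t)) has_real_derivative
     ((c*exp(-t)*qf (V t))*((c*exp(-t)*qf (V t))*R(V t) - 1))) (at t)"
  apply (rule derivative_eq_intros DERIV_chain2[OF qf_deriv[OF vp] dV] refl)+
  using alg[of "V t" "c*exp(-t)", OF vp] by (simp add: algebra_simps)

lemma part2:
  assumes "(v0, p0) \<in> Omega"
  shows "\<exists>v p. is_solution_on {0..} v p \<and> v 0 = v0 \<and> p 0 = p0 \<and> (\<forall>t\<ge>0. (v t, p t) \<in> Omega)"
proof -
  have v0: "v0 > 0" and p0u: "p0 \<le> v0" and p0l: "-(1/v0) \<le> p0" using assms by (auto simp: Omega_def)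
  define w0 where "w0 = Wq v0 p0"
  define Y where "Y = (\<lambda>t. Fv v0 + w0*(exp(-t) - 1))"
  define vs where "vs = (\<lambda>t. Gi (Y t))"
  define ps where "ps = (\<lambda>t. w0*exp(-t)*qf (vs t))"
  have Yr: "0 < Y t \<and> Y t < pi" if "t \<ge> 0" for t
  proof -
    have et: "exp(-t) \<le> 1" "exp(-t) > 0" using that by auto
    have Kp: "0 < Kv v0" by (rule Kv_pos[OF v0])
    have Lp: "Lv v0 < pi" by (rule Lv_lt_pi[OF v0])
    have g: "w0 \<le> 4* v0^3/(1+v0^2)^2" using Wq_le[OF v0] p0u by (simp add: w0_def)
    have h: "-4* v0/(1+v0^2)^2 \<le> w0" using Wq_ge[OF v0] p0l by (simp add: w0_def)
    have gp: "4* v0^3/(1+v0^2)^2 > 0" "4* v0/(1+v0^2)^2 > 0" using v0 pos1[of v0] by auto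
    have eq: "w0*(exp(-t) - 1) = w0*exp(-t) - w0" by (simp add: algebra_simps)
    show ?thesis
    proof (cases "w0 \<ge> 0")
      case True
      have "w0*exp(-t) \<ge> 0" "w0*exp(-t) \<le> w0" using True et by (auto simp: mult_left_le)
      then show ?thesis using Kp Lp g gp eq unfolding Y_def Kv_def Lv_def by auto
    next
      case False
      have "w0*exp(-t) < 0" "w0*exp(-t) \<ge> w0" using False et
        by (auto simp: mult_neg_pos mult_le_cancel_left1)
      then show ?thesis using Kp Lp g h gp eq unfolding Y_def Kv_def Lv_def by auto
    qed
  qed
  have vsp: "0 < vs t \<and> Fv (vs t) = Y t" if "t \<ge> 0" for t
    using Gi_prop Yr[OF that] unfolding vs_def by blast
  have dvs: "(vs has_real_derivative -(w0*exp(-t)*(1+(vs t)^2)^3/(16*(vs t)^2))) (at t)"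
    if t: "t \<ge> 0" for t
  proof -
    have dY: "(Y has_real_derivative -(w0*exp(-t))) (at t)"
      unfolding Y_def by (rule derivative_eq_intros refl)+ simp
    have "(vs has_real_derivative inverse (16*(Gi (Y t))^2/(1+(Gi (Y t))^2)^3) * (-(w0*exp(-t)))) (at t)"
      unfolding vs_def using Yr[OF t] by (intro DERIV_chain2[OF Gi_deriv dY]) auto
    moreover have "inverse (16*(Gi (Y t))^2/(1+(Gi (Y t))^2)^3) * (-(w0*exp(-t))) =
        -(w0*exp(-t)*(1+(vs t)^2)^3/(16*(vs t)^2))"
      unfolding vs_def using Yr[OF t] by (simp add: field_simps)
    ultimately show ?thesis by simp
  qed
  have dps: "(ps has_real_derivative (ps t*(ps t*R(vs t) - 1))) (at t)" if t: "t \<ge> 0" for t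
  proof -
    have vp: "vs t > 0" using vsp[OF t] by blast
    show ?thesis unfolding ps_def using vp by (intro ps_deriv dvs[OF t]) auto
  qed
  have dvs': "(vs has_real_derivative (-(ps t/4)*(1+(vs t)^2))) (at t)" if t: "t \<ge> 0" for t
  proof -
    have vp: "vs t > 0" using vsp[OF t] by blast
    have eq: "-(w0*exp(-t)*(1+(vs t)^2)^3/(16*(vs t)^2)) = -(ps t/4)*(1+(vs t)^2)"
      unfolding ps_def qf_def using vp by (simp add: power2_eq_square power3_eq_cube divide_simps)
    show ?thesis using dvs[OF t] unfolding eq .
  qed
  have solS: "is_solution_on S vs ps" if "S \<subseteq> {0..}" for S
    unfolding is_solution_on_def
  proof
    fix t assume "t \<in> S"
    hence t: "t \<ge> 0" using that by auto
    show "vs t \<noteq> 0 \<and> (ps has_real_derivative ps t * (ps t * R (vs t) - 1)) (at t within S) \<and>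
        (vs has_real_derivative - (ps t / 4) * (1 + (vs t)\<^sup>2)) (at t within S)"
      using vsp[OF t] dps[OF t] dvs'[OF t] by (auto intro: has_field_derivative_at_within)
  qed
  have vs0: "vs 0 = v0" unfolding vs_def Y_def using Gi_Fv[OF v0] by simp
  have ps0: "ps 0 = p0" unfolding ps_def vs0 w0_def Wq_def qf_def using v0 pos1[of v0]
    by (simp add: power2_eq_square divide_simps)
  have "\<forall>t\<ge>0. (vs t, ps t) \<in> Omega"
  proof (intro allI impI)
    fix t :: real assume t: "t \<ge> 0"
    have sub: "{0..<t+1} \<subseteq> {0::real..}" by auto
    show "(vs t, ps t) \<in> Omega"
      by (rule part1[where T="t+1" and v=vs and p=ps and t=t]) (use t solS[OF sub] vs0 ps0 assms in auto)
  qed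
  thus ?thesis using solS[of "{0..}"] vs0 ps0 by blast
qed

theorem theoremA1:
  fixes v0 p0 :: real
  assumes "(v0, p0) \<in> Omega"
  shows "(\<forall>T v p. T > 0 \<and> is_solution_on {0..<T} v p \<and> v 0 = v0 \<and> p 0 = p0
            \<longrightarrow> (\<forall>t\<in>{0..<T}. (v t, p t) \<in> Omega))
       \<and> (\<exists>v p. is_solution_on {0..} v p \<and> v 0 = v0 \<and> p 0 = p0
            \<and> (\<forall>t\<ge>0. (v t, p t) \<in> Omega))"
proof (intro conjI allI impI ballI)
  fix T v p t assume h: "T > 0 \<and> is_solution_on {0..<T} v p \<and> v 0 = v0 \<and> p 0 = p0"
    and t: "t \<in> {0..<T}"
  show "(v t, p t) \<in> Omega"
    using part1[where T=T and v=v and p=p and t=t] h t assms by auto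
next
  show "\<exists>v p. is_solution_on {0..} v p \<and> v 0 = v0 \<and> p 0 = p0 \<and> (\<forall>t\<ge>0. (v t, p t) \<in> Omega)"
    by (rule part2[OF assms])
qed

end
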